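(* For each $\alpha>0$ let $X_\alpha=(x_1,x_2,x_3)$ be as in the context, and set $y_1=x_1$, $y_2=x_2$, $y_3=x_3+\frac{x_1x_2}{2}$, viewed as functions of $(u,v)$. Let $(\hat u,\hat v)\in\mathbb{R}^2$, and for $\alpha>0$ let $u_\alpha=\frac{\hat u}{\alpha}$ and $v_\alpha=\frac{4\ln\alpha+\hat v}{2\alpha}$. Then, as $\alpha\to+\infty$, $$y_1(u_\alpha,v_\alpha)\to\frac{\sin\hat u}{4}e^{\hat v/2},\qquad y_2(u_\alpha,v_\alpha)\to0,\qquad y_3(u_\alpha,v_\alpha)\to-\frac{\cos\hat u}{4}e^{\hat v/2}.$$
   Context: $\mathrm{Nil}_3$ is $\mathbb{R}^3$ with the metric $dx_1^2+dx_2^2+\big(dx_3+\tfrac12(x_2dx_1-x_1dx_2)\big)^2$. For $\alpha>0$ and $\theta\in\mathbb{R}$ set $C_{\alpha,\theta}=\frac{\sin(2\theta)}{2\alpha}$ and $P_{\alpha,\theta}(x)=\alpha^2+\cos(2\theta)x^2-C_{\alpha,\theta}^2x^4$. Let $\theta^+_\alpha=\pi/2$ if $\alpha>1$, and $\theta^+_\alpha=\frac12\arccos(1-2\alpha^2)$ if $\alpha\le1$. Let $$L(\alpha,\theta)=\int_{-1}^1\frac{2\alpha C_{\alpha,\theta}^2x^2-\alpha\cos(2\theta)+C_{\alpha,\theta}^2x^2\sqrt{P_{\alpha,\theta}(x)}}{\sqrt{(1-x^2)P_{\alpha,\theta}(x)}(\alpha+\sqrt{P_{\alpha,\theta}(x)})}dx.$$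 Let $\theta=\tilde\theta_\alpha$ be the unique $\theta\in(0,\theta^+_\alpha)\cap(0,\pi/4)$ with $L(\alpha,\theta)=0$, and $C=C_{\alpha,\theta}$. Let $\varphi$ solve $\varphi'^2=P_{\alpha,\theta}(\cos\varphi)$ with $\varphi(0)=0$ and $\varphi'(0)\le0$. Define $\beta'=C\cos^2\varphi$ with $\beta(0)=0$, and $G'=\frac{C^2\cos^2\varphi-\cos 2\theta}{\alpha-\varphi'}$ with $G(0)=0$. Put $A=\alpha v+\beta(u)$ and $X_\alpha(u,v)=(x_1,x_2,x_3)$ with $x_1=\frac{G'}{\alpha}\cos\varphi\sinh A-\frac C\alpha\sin\varphi\cosh A$, $x_2=Cv-G$, $x_3=-\frac{x_1x_2}2+\frac C\alpha(\frac{G'}{\alpha}-1)\cos\varphi\cosh A-\frac1\alpha(\frac{C^2}\alpha+G')\sin\varphi\sinh A$, where $\varphi,G,G'$ are evaluated at $u$. All these quantities depend on $\alpha$. *)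

theory Defs
  imports "HOL-Analysis.Analysis"
begin

definition Ccoef :: "real \<Rightarrow> real \<Rightarrow> real" where
  "Ccoef \<alpha> \<theta> = sin (2 * \<theta>) / (2 * \<alpha>)"

definition Ppoly :: "real \<Rightarrow> real \<Rightarrow> real \<Rightarrow> real" where
  "Ppoly \<alpha> \<theta> x = \<alpha>^2 + cos (2 * \<theta>) * x^2 - (Ccoef \<alpha> \<theta>)^2 * x^4"

definition theta_plus :: "real \<Rightarrow> real" where
  "theta_plus \<alpha> = (if \<alpha> > 1 then pi / 2 else arccos (1 - 2 * \<alpha>^2) / 2)"

text \<open>The integral L(alpha,theta) over [-1,1] (Henstock-Kurzweil integral; the
  integrand is absolutely integrable, with integrable singularities at the endpoints).\<close>
definition Lint :: "real \<Rightarrow> real \<Rightarrow> real" where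
  "Lint \<alpha> \<theta> = integral {-1..1} (\<lambda>x.
      (2 * \<alpha> * (Ccoef \<alpha> \<theta>)^2 * x^2 - \<alpha> * cos (2 * \<theta>)
        + (Ccoef \<alpha> \<theta>)^2 * x^2 * sqrt (Ppoly \<alpha> \<theta> x))
      / (sqrt ((1 - x^2) * Ppoly \<alpha> \<theta> x) * (\<alpha> + sqrt (Ppoly \<alpha> \<theta> x))))"

definition Gder :: "real \<Rightarrow> real \<Rightarrow> real \<Rightarrow> real \<Rightarrow> real" where
  "Gder \<alpha> \<theta> ph dph = ((Ccoef \<alpha> \<theta>)^2 * (cos ph)^2 - cos (2 * \<theta>)) / (\<alpha> - dph)"

definition Xmap :: "real \<Rightarrow> real \<Rightarrow> (real \<Rightarrow> real) \<Rightarrow> (real \<Rightarrow> real) \<Rightarrow> (real \<Rightarrow> real)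
    \<Rightarrow> (real \<Rightarrow> real) \<Rightarrow> real \<Rightarrow> real \<Rightarrow> real \<times> real \<times> real" where
  "Xmap \<alpha> \<theta> ph dph be G u v =
    (let C = Ccoef \<alpha> \<theta>; A = \<alpha> * v + be u; g' = Gder \<alpha> \<theta> (ph u) (dph u);
         x1 = g' / \<alpha> * cos (ph u) * sinh A - C / \<alpha> * sin (ph u) * cosh A;
         x2 = C * v - G u;
         x3 = - x1 * x2 / 2 + C / \<alpha> * (g' / \<alpha> - 1) * cos (ph u) * cosh A
              - 1 / \<alpha> * (C^2 / \<alpha> + g') * sin (ph u) * sinh A
     in (x1, x2, x3))"

end

theory Submission
  imports Defs "HOL-Real_Asymp.Real_Asymp"
begin

lemma deriv_sign_const:
  fixes f f' :: "real \<Rightarrow> real"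
  assumes der: "\<And>t. (f has_real_derivative f' t) (at t)"
    and nz: "\<And>t. f' t \<noteq> 0" and neg0: "f' 0 < 0"
  shows "f' b < 0"
proof (rule ccontr)
  assume "\<not> f' b < 0"
  with nz have pos: "f' b > 0" by (metis linorder_neqE_linordered_idom)
  have cont: "continuous_on S f" for S
    using der by (meson DERIV_continuous continuous_at_imp_continuous_on)
  consider "b > 0" | "b < 0" | "b = 0" by linarith
  then show False
  proof cases
    case 1
    obtain m where m: "m \<in> {0..b}" "\<And>y. y \<in> {0..b} \<Longrightarrow> f m \<le> f y"
      using continuous_attains_inf[of "{0..b}" f] cont 1 by force
    obtain d1 where d1: "d1 > 0" "\<And>h. h > 0 \<Longrightarrow> h < d1 \<Longrightarrow> f 0 > f (0 + h)"
      using DERIV_neg_dec_right[OF der neg0] by blast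
    obtain d2 where d2: "d2 > 0" "\<And>h. h > 0 \<Longrightarrow> h < d2 \<Longrightarrow> f (b - h) < f b"
      using DERIV_pos_inc_left[OF der pos] by blast
    have "m \<noteq> 0"
    proof
      assume "m = 0"
      define h where "h = min (d1/2) (b/2)"
      have "h > 0" "h < d1" "h \<le> b" using d1 1 by (auto simp: h_def)
      then show False using d1(2)[of h] m(2)[of h] \<open>m = 0\<close> by auto
    qed
    moreover have "m \<noteq> b"
    proof
      assume "m = b"
      define h where "h = min (d2/2) (b/2)"
      have "h > 0" "h < d2" "h \<le> b" using d2 1 by (auto simp: h_def)
      then show False using d2(2)[of h] m(2)[of "b-h"] \<open>m = b\<close> by auto
    qed
    ultimately have mi: "0 < m" "m < b" using m(1) by auto
    have "f' m = 0"
      by (rule DERIV_local_min[OF der, of "min m (b - m)"])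
         (use mi m(2) in \<open>auto simp: abs_if\<close>)
    with nz show False by blast
  next
    case 2
    obtain m where m: "m \<in> {b..0}" "\<And>y. y \<in> {b..0} \<Longrightarrow> f y \<le> f m"
      using continuous_attains_sup[of "{b..0}" f] cont 2 by force
    obtain d1 where d1: "d1 > 0" "\<And>h. h > 0 \<Longrightarrow> h < d1 \<Longrightarrow> f 0 < f (0 - h)"
      using DERIV_neg_dec_left[OF der neg0] by blast
    obtain d2 where d2: "d2 > 0" "\<And>h. h > 0 \<Longrightarrow> h < d2 \<Longrightarrow> f b < f (b + h)"
      using DERIV_pos_inc_right[OF der pos] by blast
    have "m \<noteq> 0"
    proof
      assume "m = 0"
      define h where "h = min (d1/2) (-b/2)"
      have "h > 0" "h < d1" "h \<le> -b" using d1 2 by (auto simp: h_def)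
      then show False using d1(2)[of h] m(2)[of "-h"] \<open>m = 0\<close> by auto
    qed
    moreover have "m \<noteq> b"
    proof
      assume "m = b"
      define h where "h = min (d2/2) (-b/2)"
      have "h > 0" "h < d2" "h \<le> -b" using d2 2 by (auto simp: h_def)
      then show False using d2(2)[of h] m(2)[of "b+h"] \<open>m = b\<close> by auto
    qed
    ultimately have mi: "b < m" "m < 0" using m(1) by auto
    have "f' m = 0"
      by (rule DERIV_local_max[OF der, of "min (-m) (m - b)"])
         (use mi m(2) in \<open>auto simp: abs_if\<close>)
    with nz show False by blast
  next
    case 3 with pos neg0 show False by simp
  qed
qed

lemma mvt_bound:
  fixes f f' :: "real \<Rightarrow> real"
  assumes der: "\<And>t. (f has_real_derivative f' t) (at t)"
    and bnd: "\<And>t. \<bar>f' t\<bar> \<le> B"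
  shows "\<bar>f x - f y\<bar> \<le> B * \<bar>x - y\<bar>"
proof -
  have *: "\<bar>f b - f a\<bar> \<le> B * \<bar>b - a\<bar>" if ab: "a < b" for a b
  proof -
    obtain z where "f b - f a = (b - a) * f' z" using MVT2[of a b f f', OF ab der] by blast
    then have "\<bar>f b - f a\<bar> = \<bar>b - a\<bar> * \<bar>f' z\<bar>" by (simp add: abs_mult)
    also have "\<dots> \<le> \<bar>b - a\<bar> * B" by (rule mult_left_mono[OF bnd]) simp
    finally show ?thesis by (simp add: mult.commute)
  qed
  consider "x < y" | "y < x" | "x = y" by linarith
  then show ?thesis
  proof cases
    case 1 then show ?thesis using *[OF 1] by (simp add: abs_minus_commute)
  next
    case 2 then show ?thesis using *[OF 2] by simp
  next
    case 3 then show ?thesis using bnd[of 0] by simp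
  qed
qed

lemma integrand_bounds:
  fixes a c C x :: real
  assumes a: "a > 1" and c: "0 \<le> c" "c \<le> 1" and C: "0 \<le> C" "C \<le> 1/(2*a)"
    and x: "-1 < x" "x < 1"
  defines "P \<equiv> a^2 + c*x^2 - C^2*x^4"
  defines "F \<equiv> (2*a*C^2*x^2 - a*c + C^2*x^2* sqrt P) / (sqrt ((1-x^2)*P) * (a + sqrt P))"
  shows "a*c - (3*a+1)/(4*a^2) \<ge> 0 \<Longrightarrow> F \<le> -(a*c - (3*a+1)/(4*a^2)) / ((a+1)*(2*a+1))"
    and "\<bar>F\<bar> \<le> (2*(4*a+1)/a^2) * inverse (sqrt (1-x^2))"
proof -
  have x2: "0 \<le> x^2" "x^2 < 1" using x by (auto simp: abs_square_less_1)
  have x4: "x^4 = (x^2)^2" by simp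
  have x4b: "0 \<le> x^4" "x^4 \<le> 1"
    using x2 power_le_one[of "x^2" 2] unfolding x4 by auto
  have Ca: "C^2 \<le> (1/(2*a))^2" using C by (intro power_mono) auto
  have C2: "C^2 \<le> 1/(4*a^2)" using Ca by (simp add: power_divide power_mult_distrib)
  have a2: "a^2 > 1" using a by (simp add: one_less_power)
  have C21: "C^2 \<le> 1/4" using C2 a2
    by (smt (verit, best) divide_le_eq_1_pos frac_le mult_le_cancel_left1 zero_less_divide_1_iff)
  have Clow: "C^2*x^4 \<le> C^2" using x4b by (simp add: mult_left_le)
  have cx: "0 \<le> c*x^2" "c*x^2 \<le> 1" using c x2 by (auto simp: mult_le_one)
  have Pl: "P \<ge> a^2/4" using Clow cx C21 a2 unfolding P_def by auto
  have Pu: "P \<le> (a+1)^2"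
  proof -
    have "0 \<le> C^2*x^4" using x4b by simp
    moreover have "(a+1)^2 = a^2 + 2*a + 1" by (simp add: power2_eq_square algebra_simps)
    ultimately show ?thesis using cx a unfolding P_def by linarith
  qed
  define SP where "SP = sqrt P"
  have SPl: "SP \<ge> a/2"
  proof -
    have "sqrt (a^2/4) \<le> SP" unfolding SP_def using Pl by (rule real_sqrt_le_mono)
    moreover have "sqrt (a^2/4) = a/2" using a by (simp add: real_sqrt_divide)
    ultimately show ?thesis by simp
  qed
  have SPu: "SP \<le> a+1"
  proof -
    have "SP \<le> sqrt ((a+1)^2)" unfolding SP_def using Pu by (rule real_sqrt_le_mono)
    then show ?thesis using a by simp
  qed
  define q where "q = sqrt (1 - x^2)"
  have q: "0 < q" "q \<le> 1" using x2 by (auto simp: q_def)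
  have sq: "sqrt ((1-x^2)*P) = q * SP" by (simp add: q_def SP_def real_sqrt_mult)
  define D where "D = q * SP * (a + SP)"
  have Dpos: "D > 0" using q SPl a by (simp add: D_def)
  have SP0: "SP \<ge> 0" using SPl a by simp
  have Du: "D \<le> (a+1)*(2*a+1)"
  proof -
    have "q*SP \<le> 1*SP" using mult_right_mono[of q 1 SP] q SP0 by simp
    then have "q*SP*(a+SP) \<le> SP*(a+SP)" using mult_right_mono[of "q*SP" SP "a+SP"] SP0 a by simp
    moreover have "SP*(a+SP) \<le> (a+1)*(2*a+1)"
      using mult_mono[of SP "a+1" "a+SP" "2*a+1"] SPu SP0 a by simp
    ultimately show ?thesis unfolding D_def by linarith
  qed
  have Dl: "D \<ge> q * (a^2/2)"
  proof -
    have "a/2*a \<le> SP*(a+SP)" using mult_mono[of "a/2" SP a "a+SP"] SPl SP0 a by simp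
    then have "a^2/2 \<le> SP*(a+SP)" by (simp add: power2_eq_square)
    then show ?thesis unfolding D_def using q mult_left_mono[of "a^2/2" "SP*(a+SP)" q]
      by (simp add: mult.assoc)
  qed
  define N where "N = 2*a*C^2*x^2 - a*c + C^2*x^2* SP"
  have FND: "F = N / D" by (simp add: F_def N_def D_def sq SP_def mult.assoc)
  have t1: "2*a*C^2*x^2 \<le> 2*a*C^2" using x2 a by (simp add: mult_left_le)
  have t1': "0 \<le> 2*a*C^2*x^2" using x2 a by simp
  have t2: "C^2*x^2* SP \<le> C^2*(a+1)"
  proof -
    have "C^2*x^2* SP \<le> C^2*1* SP" using x2 SPl a by (intro mult_right_mono mult_left_mono) auto
    also have "\<dots> \<le> C^2*(a+1)" using SPu by (simp add: mult_left_mono)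
    finally show ?thesis .
  qed
  have t2': "0 \<le> C^2*x^2* SP" using SPl a x2 by simp
  have Nu: "N \<le> (3*a+1)/(4*a^2) - a*c"
  proof -
    have "N \<le> (3*a+1)*C^2 - a*c" using t1 t2 unfolding N_def by (simp add: algebra_simps)
    also have "(3*a+1)*C^2 \<le> (3*a+1)*(1/(4*a^2))" using C2 a by (intro mult_left_mono) auto
    finally show ?thesis by simp
  qed
  have Nabs: "\<bar>N\<bar> \<le> 4*a+1"
  proof -
    have e1: "2*a*C^2 \<le> 2*a*1" using C21 a by (intro mult_left_mono) auto
    have e2: "C^2*(a+1) \<le> 1*(a+1)" using C21 a by (intro mult_right_mono) auto
    have e3: "a*c \<le> a*1" using c a by (intro mult_left_mono) auto
    have e4: "0 \<le> a*c" using a c by simp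
    have f1: "2*a*C^2*x^2 \<le> 2*a" using e1 t1 by linarith
    have f2: "C^2*x^2*SP \<le> a+1" using order_trans[OF t2 e2] by simp
    have f3: "a*c \<le> a" using e3 by linarith
    show ?thesis using f1 f2 f3 e4 t1' t2' unfolding N_def
      by (smt (verit))
  qed
  show "a*c - (3*a+1)/(4*a^2) \<ge> 0 \<Longrightarrow> F \<le> -(a*c - (3*a+1)/(4*a^2)) / ((a+1)*(2*a+1))"
  proof -
    assume d: "a*c - (3*a+1)/(4*a^2) \<ge> 0"
    define \<delta> where "\<delta> = a*c - (3*a+1)/(4*a^2)"
    have "N \<le> -\<delta>" using Nu by (simp add: \<delta>_def)
    then have "N / D \<le> -\<delta> / D" using Dpos divide_right_mono[of N "-\<delta>" D] by simp
    also have "-\<delta> / D \<le> -\<delta> / ((a+1)*(2*a+1))"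
    proof -
      have "\<delta> / ((a+1)*(2*a+1)) \<le> \<delta> / D" using d Dpos Du a
        by (intro divide_left_mono) (auto simp: \<delta>_def)
      then show ?thesis by simp
    qed
    finally show ?thesis by (simp add: FND \<delta>_def)
  qed
  show "\<bar>F\<bar> \<le> (2*(4*a+1)/a^2) * inverse (sqrt (1-x^2))"
  proof -
    have "\<bar>F\<bar> = \<bar>N\<bar> / D" using Dpos by (simp add: FND)
    also have "\<dots> \<le> (4*a+1) / D" using Nabs Dpos divide_right_mono[of "\<bar>N\<bar>" "4*a+1" D] by simp
    also have "\<dots> \<le> (4*a+1) / (q * (a^2/2))"
    proof (rule divide_left_mono)
      show "q * (a^2/2) \<le> D" by (rule Dl)
      show "0 \<le> 4*a+1" using a by simp
      show "0 < D * (q * (a^2/2))" using Dpos q a by simp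
    qed
    also have "\<dots> = (2*(4*a+1)/a^2) * inverse q" using q a
      by (simp add: divide_simps)
    also have "\<dots> = (2*(4*a+1)/a^2) * inverse (sqrt (1-x^2))" by (simp add: q_def)
    finally show ?thesis .
  qed
qed

lemma S_leb: "{-1<..<1::real} \<in> sets lebesgue" by simp

lemma inv_sqrt_integrable: "(\<lambda>x::real. inverse (sqrt (1 - x^2))) integrable_on {-1<..<1}"
proof -
  have "((\<lambda>x::real. inverse (sqrt (1 - x^2))) has_integral (arcsin 1 - arcsin (-1))) {-1..1}"
  proof (rule fundamental_theorem_of_calculus_interior)
    show "continuous_on {-1..1} arcsin" by (rule continuous_on_arcsin')
    show "(arcsin has_vector_derivative inverse (sqrt (1 - x^2))) (at x)" if "x \<in> {-1<..<1}" for x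
      using DERIV_arcsin[of x] that by (simp add: has_real_derivative_iff_has_vector_derivative)
  qed simp
  then show ?thesis using integrable_on_open_interval_real by blast
qed

lemma Lint_neg:
  assumes a: "\<alpha> > 1" and t: "0 < t" "t < pi/4" and cb: "cos (2*t) > 1/\<alpha>^2"
  shows "Lint \<alpha> t < 0"
proof -
  define c where "c = cos (2*t)"
  define C where "C = Ccoef \<alpha> t"
  have s: "sin (2*t) > 0" using t by (intro sin_gt_zero) auto
  have C0: "0 \<le> C" using s a by (simp add: C_def Ccoef_def)
  have C1: "C \<le> 1/(2*\<alpha>)" using a sin_le_one[of "2*t"] by (simp add: C_def Ccoef_def divide_right_mono)
  have a2: "\<alpha>^2 > 0" using a by simp
  have c0: "0 \<le> c" using cb a2 unfolding c_def by (smt (verit) zero_less_divide_1_iff)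
  have c1: "c \<le> 1" by (simp add: c_def)
  define \<delta> where "\<delta> = \<alpha>*c - (3*\<alpha>+1)/(4*\<alpha>^2)"
  have "\<alpha>*c > \<alpha> * (1/\<alpha>^2)" using cb a mult_strict_left_mono[of "1/\<alpha>^2" c \<alpha>] by (simp add: c_def)
  moreover have "\<alpha> * (1/\<alpha>^2) = 4*\<alpha>/(4*\<alpha>^2)" using a by (simp add: power2_eq_square)
  moreover have "(3*\<alpha>+1)/(4*\<alpha>^2) < 4*\<alpha>/(4*\<alpha>^2)" using a a2 by (intro divide_strict_right_mono) auto
  ultimately have dpos: "\<delta> > 0" unfolding \<delta>_def by linarith
  define M where "M = (\<alpha>+1)*(2*\<alpha>+1)"
  have Mpos: "M > 0" using a by (simp add: M_def)
  define K where "K = 2*(4*\<alpha>+1)/\<alpha>^2"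
  define f where "f = (\<lambda>x. (2 * \<alpha> * (Ccoef \<alpha> t)^2 * x^2 - \<alpha> * cos (2 * t)
        + (Ccoef \<alpha> t)^2 * x^2 * sqrt (Ppoly \<alpha> t x))
      / (sqrt ((1 - x^2) * Ppoly \<alpha> t x) * (\<alpha> + sqrt (Ppoly \<alpha> t x))))"
  have Lf: "Lint \<alpha> t = integral {-1..1} f" by (simp add: Lint_def f_def)
  have fx: "f x = (2*\<alpha>*C^2*x^2 - \<alpha>*c + C^2*x^2 * sqrt (\<alpha>^2 + c*x^2 - C^2*x^4))
      / (sqrt ((1-x^2)*(\<alpha>^2 + c*x^2 - C^2*x^4)) * (\<alpha> + sqrt (\<alpha>^2 + c*x^2 - C^2*x^4)))" for x
    by (simp add: f_def Ppoly_def C_def c_def)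
  have fup: "f x \<le> -\<delta>/M" if "x \<in> {-1<..<1}" for x
    using integrand_bounds(1)[of \<alpha> c C x] that a c0 c1 C0 C1 dpos unfolding fx \<delta>_def M_def by auto
  have fabs: "\<bar>f x\<bar> \<le> K * inverse (sqrt (1 - x^2))" if "x \<in> {-1<..<1}" for x
    using integrand_bounds(2)[of \<alpha> c C x] that a c0 c1 C0 C1 unfolding fx K_def by auto
  have meas: "f \<in> borel_measurable (lebesgue_on {-1<..<1})"
    unfolding f_def Ppoly_def
    by (intro borel_measurable_divide continuous_imp_measurable_on_sets_lebesgue S_leb continuous_intros)
  have gint: "(\<lambda>x. K * inverse (sqrt (1 - x^2))) integrable_on {-1<..<1::real}"
    using inv_sqrt_integrable by (rule integrable_on_mult_right)
  have fint: "f integrable_on {-1<..<1}"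
    by (rule measurable_bounded_by_integrable_imp_integrable_real[OF meas gint fabs S_leb])
  have "integral {-1<..<1} f \<le> integral {-1<..<1} (\<lambda>x::real. -\<delta>/M)"
  proof (rule integral_le)
    show "f integrable_on {-1<..<1}" by (rule fint)
    show "(\<lambda>x::real. -\<delta>/M) integrable_on {-1<..<1}"
      by (subst integrable_on_open_interval_real) (rule integrable_const_ivl)
  qed (use fup in auto)
  also have "integral {-1<..<1} (\<lambda>x::real. -\<delta>/M) = integral {-1..1} (\<lambda>x::real. -\<delta>/M)"
    using integral_open_interval[where f="\<lambda>x::real. -\<delta>/M" and a="-1" and b=1] by simp
  also have "\<dots> = 2 * (-\<delta>/M)" by simp
  finally have "integral {-1<..<1} f \<le> 2 * (-\<delta>/M)" .
  moreover have "-\<delta>/M < 0" using dpos Mpos by simp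
  ultimately have "integral {-1<..<1} f < 0" by linarith
  moreover have "integral {-1<..<1} f = integral {-1..1} f"
    using integral_open_interval[where f=f and a="-1" and b=1] by simp
  ultimately show ?thesis using Lf by simp
qed

lemma sqrtP_bound:
  fixes a c C y :: real
  assumes a: "a > 1" and c: "0 \<le> c" "c \<le> 1" and C: "0 \<le> C" "C \<le> 1/(2*a)" and y: "\<bar>y\<bar> \<le> 1"
  shows "a^2 + c*y^2 - C^2*y^4 > 0" and "\<bar>sqrt (a^2 + c*y^2 - C^2*y^4) - a\<bar> \<le> 1/a"
proof -
  have y2: "0 \<le> y^2" "y^2 \<le> 1"
    using y power_le_one[of "\<bar>y\<bar>" 2] by auto
  have y4: "0 \<le> y^4" "y^4 \<le> 1"
    using y2 power_le_one[of "y^2" 2] by (auto simp flip: power_mult)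
  have Ch: "C \<le> 1/2" using C a by (smt (verit) frac_le)
  have C2: "C^2 \<le> 1/4" using power_mono[OF Ch C(1), of 2] by (simp add: power2_eq_square)
  have t1: "C^2*y^4 \<le> C^2" using y4 by (simp add: mult_left_le)
  have t1': "0 \<le> C^2*y^4" using y4 by simp
  have t2: "c*y^2 \<le> 1" using c y2 by (simp add: mult_le_one)
  have t2': "0 \<le> c*y^2" using c y2 by simp
  define P where "P = a^2 + c*y^2 - C^2*y^4"
  have a2: "a^2 > 1" using a by (simp add: one_less_power)
  have d1: "\<bar>P - a^2\<bar> \<le> 1" using t1 t1' t2 t2' C2 unfolding P_def by linarith
  have Ppos: "P > 0" using t1 t1' t2 t2' C2 a2 unfolding P_def by linarith
  then show "a^2 + c*y^2 - C^2*y^4 > 0" by (simp add: P_def)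
  have sp: "sqrt P \<ge> 0" using Ppos by simp
  have prod: "(sqrt P - a) * (sqrt P + a) = P - a^2"
  proof -
    have sq: "sqrt P * sqrt P = P" using Ppos by (simp add: less_imp_le)
    show ?thesis using sq by (simp add: algebra_simps power2_eq_square)
  qed
  have "\<bar>sqrt P - a\<bar> * (sqrt P + a) = \<bar>P - a^2\<bar>"
    using prod sp a by (metis abs_mult abs_of_nonneg add_nonneg_nonneg less_imp_le less_trans zero_less_one)
  then have "\<bar>sqrt P - a\<bar> * a \<le> 1"
    using d1 sp a mult_left_mono[of a "sqrt P + a" "\<bar>sqrt P - a\<bar>"] by (simp add: algebra_simps)
  then show "\<bar>sqrt (a^2 + c*y^2 - C^2*y^4) - a\<bar> \<le> 1/a"
    using a by (simp add: P_def field_simps)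
qed

lemma Xmap_x1: "fst (Xmap a t ph dph be G u v) = Gder a t (ph u) (dph u) / a * cos (ph u) * sinh (a* v + be u)
   - Ccoef a t / a * sin (ph u) * cosh (a* v + be u)"
  by (simp add: Xmap_def Let_def)

lemma Xmap_x2: "fst (snd (Xmap a t ph dph be G u v)) = Ccoef a t * v - G u"
  by (simp add: Xmap_def Let_def)

lemma aux_cancel: "- x * y / 2 + p - q + x * y / 2 = p - (q::real)" by simp

lemma Xmap_y3: "snd (snd (Xmap a t ph dph be G u v)) + fst (Xmap a t ph dph be G u v) * fst (snd (Xmap a t ph dph be G u v)) / 2
   = Ccoef a t / a * (Gder a t (ph u) (dph u) / a - 1) * cos (ph u) * cosh (a* v + be u)
     - 1 / a * ((Ccoef a t)^2 / a + Gder a t (ph u) (dph u)) * sin (ph u) * sinh (a* v + be u)"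
  unfolding Xmap_def Let_def fst_conv snd_conv by (rule aux_cancel)

lemma alg1: "(a::real) \<noteq> 0 \<Longrightarrow> g/a*X*S - C/a*Y*H = (a*g)*X*(S/a^2) - (a*C)*Y*(H/a^2)"
  by (simp add: field_simps power2_eq_square)

lemma alg2: "(a::real) \<noteq> 0 \<Longrightarrow> C/a*(g/a - 1)*X*H - 1/a*(C^2/a + g)*Y*S
   = (a*C)*((a*g)*(1/a^2) - 1)*X*(H/a^2) - ((a*C)^2*(1/a^2) + a*g)*Y*(S/a^2)"
  by (simp add: field_simps power2_eq_square)

theorem proposition6p1:
  fixes \<theta> :: "real \<Rightarrow> real"
    and ph dph be G :: "real \<Rightarrow> real \<Rightarrow> real"
    and uh vh :: real
  assumes theta: "\<And>\<alpha>. \<alpha> > 0 \<Longrightarrow> 0 < \<theta> \<alpha> \<and> \<theta> \<alpha> < theta_plus \<alpha> \<and> \<theta> \<alpha> < pi / 4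
                         \<and> Lint \<alpha> (\<theta> \<alpha>) = 0"
    and theta_unique: "\<And>\<alpha> t. \<alpha> > 0 \<Longrightarrow> 0 < t \<Longrightarrow> t < theta_plus \<alpha> \<Longrightarrow> t < pi / 4
                         \<Longrightarrow> Lint \<alpha> t = 0 \<Longrightarrow> t = \<theta> \<alpha>"
    and phi_deriv: "\<And>\<alpha> u. \<alpha> > 0 \<Longrightarrow> (ph \<alpha> has_real_derivative dph \<alpha> u) (at u)"
    and phi_ode: "\<And>\<alpha> u. \<alpha> > 0 \<Longrightarrow> (dph \<alpha> u)^2 = Ppoly \<alpha> (\<theta> \<alpha>) (cos (ph \<alpha> u))"
    and phi_init: "\<And>\<alpha>. \<alpha> > 0 \<Longrightarrow> ph \<alpha> 0 = 0 \<and> dph \<alpha> 0 \<le> 0"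
    and beta_deriv: "\<And>\<alpha> u. \<alpha> > 0 \<Longrightarrow>
        (be \<alpha> has_real_derivative Ccoef \<alpha> (\<theta> \<alpha>) * (cos (ph \<alpha> u))^2) (at u)"
    and beta_init: "\<And>\<alpha>. \<alpha> > 0 \<Longrightarrow> be \<alpha> 0 = 0"
    and G_deriv: "\<And>\<alpha> u. \<alpha> > 0 \<Longrightarrow>
        (G \<alpha> has_real_derivative Gder \<alpha> (\<theta> \<alpha>) (ph \<alpha> u) (dph \<alpha> u)) (at u)"
    and G_init: "\<And>\<alpha>. \<alpha> > 0 \<Longrightarrow> G \<alpha> 0 = 0"
  defines "y \<equiv> \<lambda>\<alpha>. Xmap \<alpha> (\<theta> \<alpha>) (ph \<alpha>) (dph \<alpha>) (be \<alpha>) (G \<alpha>)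
                   (uh / \<alpha>) ((4 * ln \<alpha> + vh) / (2 * \<alpha>))"
  shows "((\<lambda>\<alpha>. fst (y \<alpha>)) \<longlongrightarrow> sin uh / 4 * exp (vh / 2)) at_top
       \<and> ((\<lambda>\<alpha>. fst (snd (y \<alpha>))) \<longlongrightarrow> 0) at_top
       \<and> ((\<lambda>\<alpha>. snd (snd (y \<alpha>)) + fst (y \<alpha>) * fst (snd (y \<alpha>)) / 2)
           \<longlongrightarrow> - cos uh / 4 * exp (vh / 2)) at_top"
proof -
  define c where "c = (\<lambda>\<alpha>. cos (2 * \<theta> \<alpha>))"
  define s where "s = (\<lambda>\<alpha>. sin (2 * \<theta> \<alpha>))"
  define Cc where "Cc = (\<lambda>\<alpha>. Ccoef \<alpha> (\<theta> \<alpha>))"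
  have th: "0 < c \<alpha> \<and> c \<alpha> \<le> 1/\<alpha>^2 \<and> 0 < s \<alpha> \<and> s \<alpha> \<le> 1" if a: "\<alpha> > 1" for \<alpha>
  proof -
    have t: "0 < \<theta> \<alpha>" "\<theta> \<alpha> < pi/4" "Lint \<alpha> (\<theta> \<alpha>) = 0" using theta[of \<alpha>] a by auto
    have "cos (2*\<theta> \<alpha>) > 0" using t by (intro cos_gt_zero) auto
    moreover have "sin (2*\<theta> \<alpha>) > 0" using t by (intro sin_gt_zero) auto
    moreover have "cos (2*\<theta> \<alpha>) \<le> 1/\<alpha>^2"
    proof (rule ccontr)
      assume "\<not> cos (2*\<theta> \<alpha>) \<le> 1/\<alpha>^2"
      then have "Lint \<alpha> (\<theta> \<alpha>) < 0" using Lint_neg[of \<alpha> "\<theta> \<alpha>"] a t by auto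
      with t show False by simp
    qed
    ultimately show ?thesis by (simp add: c_def s_def)
  qed
  have Cc_eq: "Cc \<alpha> = s \<alpha> / (2*\<alpha>)" for \<alpha> by (simp add: Cc_def s_def Ccoef_def)
  have Cb: "0 \<le> Cc \<alpha> \<and> Cc \<alpha> \<le> 1/(2*\<alpha>)" if a: "\<alpha> > 1" for \<alpha>
    using th[OF a] a divide_right_mono[of "s \<alpha>" 1 "2*\<alpha>"] by (auto simp: Cc_eq)
  have Cle1: "Cc \<alpha> \<le> 1" if a: "\<alpha> > 1" for \<alpha>
  proof -
    have "1/(2*\<alpha>) \<le> 1" using a by (simp add: field_simps)
    then show ?thesis using Cb[OF a] by linarith
  qed
  define PP where "PP = (\<lambda>\<alpha> u. Ppoly \<alpha> (\<theta> \<alpha>) (cos (ph \<alpha> u)))"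
  have PPb: "PP \<alpha> u > 0 \<and> \<bar>sqrt (PP \<alpha> u) - \<alpha>\<bar> \<le> 1/\<alpha>" if a: "\<alpha> > 1" for \<alpha> u
    using sqrtP_bound[of \<alpha> "c \<alpha>" "Cc \<alpha>" "cos (ph \<alpha> u)"] th[OF a] Cb[OF a] a
    by (auto simp: PP_def Ppoly_def c_def Cc_def)
  have dneg: "dph \<alpha> u < 0" if a: "\<alpha> > 1" for \<alpha> u
  proof -
    have nz: "dph \<alpha> t \<noteq> 0" for t
    proof
      assume "dph \<alpha> t = 0"
      then have "PP \<alpha> t = 0" using phi_ode[of \<alpha> t] a by (simp add: PP_def)
      with PPb[OF a, of t] show False by simp
    qed
    have d0: "dph \<alpha> 0 < 0" using phi_init[of \<alpha>] a nz[of 0] by auto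
    show ?thesis
      by (rule deriv_sign_const[of "ph \<alpha>" "dph \<alpha>", OF _ nz d0]) (use phi_deriv a in auto)
  qed
  have dsq: "dph \<alpha> u = - sqrt (PP \<alpha> u)" if a: "\<alpha> > 1" for \<alpha> u
  proof -
    have "(dph \<alpha> u)^2 = PP \<alpha> u" using phi_ode[of \<alpha> u] a by (simp add: PP_def)
    then have "sqrt (PP \<alpha> u) = \<bar>dph \<alpha> u\<bar>" by (metis real_sqrt_abs)
    then show ?thesis using dneg[OF a, of u] by simp
  qed
  have dbound: "\<bar>dph \<alpha> u + \<alpha>\<bar> \<le> 1/\<alpha>" if a: "\<alpha> > 1" for \<alpha> u
  proof -
    have "dph \<alpha> u + \<alpha> = - (sqrt (PP \<alpha> u) - \<alpha>)" using dsq[OF a, of u] by simp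
    then show ?thesis using PPb[OF a, of u] by (simp only: abs_minus_cancel)
  qed
  define U where "U = (\<lambda>\<alpha>::real. uh / \<alpha>)"
  have pb: "\<bar>ph \<alpha> (U \<alpha>) + uh\<bar> \<le> \<bar>uh\<bar> / \<alpha>^2" if a: "\<alpha> > 1" for \<alpha>
  proof -
    have "\<bar>(ph \<alpha> (U \<alpha>) + \<alpha> * U \<alpha>) - (ph \<alpha> 0 + \<alpha> * 0)\<bar> \<le> (1/\<alpha>) * \<bar>U \<alpha> - 0\<bar>"
    proof (rule mvt_bound[where f="\<lambda>t. ph \<alpha> t + \<alpha> * t" and f'="\<lambda>t. dph \<alpha> t + \<alpha>"])
      show "((\<lambda>t. ph \<alpha> t + \<alpha> * t) has_real_derivative dph \<alpha> t + \<alpha>) (at t)" for t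
        using a by (auto intro!: derivative_eq_intros phi_deriv)
      show "\<bar>dph \<alpha> t + \<alpha>\<bar> \<le> 1/\<alpha>" for t by (rule dbound[OF a])
    qed
    then show ?thesis using a phi_init[of \<alpha>] by (simp add: U_def power2_eq_square abs_divide)
  qed
  have beb: "\<bar>be \<alpha> (U \<alpha>)\<bar> \<le> \<bar>uh\<bar> / \<alpha>" if a: "\<alpha> > 1" for \<alpha>
  proof -
    have "\<bar>be \<alpha> (U \<alpha>) - be \<alpha> 0\<bar> \<le> 1 * \<bar>U \<alpha> - 0\<bar>"
    proof (rule mvt_bound[where f="be \<alpha>"])
      show "(be \<alpha> has_real_derivative Cc \<alpha> * (cos (ph \<alpha> t))^2) (at t)" for t
        using beta_deriv[of \<alpha> t] a by (simp add: Cc_def)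
      show "\<bar>Cc \<alpha> * (cos (ph \<alpha> t))^2\<bar> \<le> 1" for t
      proof -
        have "Cc \<alpha> \<le> 1" using Cle1[OF a] .
        moreover have "(cos (ph \<alpha> t))^2 \<le> 1" by (simp add: abs_square_le_1)
        ultimately show ?thesis using Cb[OF a] by (simp add: abs_mult mult_le_one)
      qed
    qed
    then show ?thesis using a beta_init[of \<alpha>] by (simp add: U_def abs_divide)
  qed
  define gg where "gg = (\<lambda>\<alpha> u. Gder \<alpha> (\<theta> \<alpha>) (ph \<alpha> u) (dph \<alpha> u))"
  have gb: "\<bar>gg \<alpha> u\<bar> \<le> 1 \<and> \<bar>\<alpha> * gg \<alpha> u\<bar> \<le> (Cc \<alpha>)^2 + c \<alpha>" if a: "\<alpha> > 1" for \<alpha> u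
  proof -
    define num where "num = (Cc \<alpha>)^2 * (cos (ph \<alpha> u))^2 - c \<alpha>"
    define den where "den = \<alpha> - dph \<alpha> u"
    have g: "gg \<alpha> u = num / den" by (simp add: gg_def Gder_def num_def den_def Cc_def c_def)
    have den: "den > \<alpha>" using dneg[OF a, of u] by (simp add: den_def)
    have cs: "(cos (ph \<alpha> u))^2 \<le> 1" by (simp add: abs_square_le_1)
    have C2: "(Cc \<alpha>)^2 \<le> 1" using Cle1[OF a] Cb[OF a] by (simp add: power_le_one)
    have n1: "0 \<le> (Cc \<alpha>)^2 * (cos (ph \<alpha> u))^2" by simp
    have n2: "(Cc \<alpha>)^2 * (cos (ph \<alpha> u))^2 \<le> (Cc \<alpha>)^2" using cs by (simp add: mult_left_le)
    have numb: "\<bar>num\<bar> \<le> (Cc \<alpha>)^2 + c \<alpha>" using n1 n2 th[OF a] unfolding num_def by linarith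
    have c1: "c \<alpha> \<le> 1" by (simp add: c_def)
    have numb1: "\<bar>num\<bar> \<le> 1" using n1 n2 C2 c1 th[OF a] unfolding num_def by linarith
    have "\<bar>gg \<alpha> u\<bar> = \<bar>num\<bar> / den" using den a by (simp add: g abs_divide)
    also have "\<dots> \<le> \<bar>num\<bar> / 1" using den a by (intro divide_left_mono) auto
    finally have A1: "\<bar>gg \<alpha> u\<bar> \<le> 1" using numb1 by simp
    have "\<bar>\<alpha> * gg \<alpha> u\<bar> = \<bar>num\<bar> * (\<alpha> / den)" using den a by (simp add: g abs_divide abs_mult)
    also have "\<dots> \<le> \<bar>num\<bar> * 1" using den a by (intro mult_left_mono) auto
    finally have A2: "\<bar>\<alpha> * gg \<alpha> u\<bar> \<le> (Cc \<alpha>)^2 + c \<alpha>" using numb by simp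
    show ?thesis using A1 A2 by simp
  qed
  have Gb: "\<bar>G \<alpha> (U \<alpha>)\<bar> \<le> \<bar>uh\<bar> / \<alpha>" if a: "\<alpha> > 1" for \<alpha>
  proof -
    have "\<bar>G \<alpha> (U \<alpha>) - G \<alpha> 0\<bar> \<le> 1 * \<bar>U \<alpha> - 0\<bar>"
    proof (rule mvt_bound[where f="G \<alpha>" and f'="gg \<alpha>"])
      show "(G \<alpha> has_real_derivative gg \<alpha> t) (at t)" for t
        using G_deriv[of \<alpha> t] a by (simp add: gg_def)
      show "\<bar>gg \<alpha> t\<bar> \<le> 1" for t using gb[OF a] by blast
    qed
    then show ?thesis using a G_init[of \<alpha>] by (simp add: U_def abs_divide)
  qed
  have EV: "eventually P at_top" if "\<And>\<alpha>::real. \<alpha> > 1 \<Longrightarrow> P \<alpha>" for P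
    using eventually_gt_at_top[of "1::real"] that by (rule eventually_mono)
  have inv2: "((\<lambda>\<alpha>::real. 1/\<alpha>^2) \<longlongrightarrow> 0) at_top" by real_asymp
  have inv1: "((\<lambda>\<alpha>::real. 1/\<alpha>) \<longlongrightarrow> 0) at_top" by real_asymp
  have inv4: "((\<lambda>\<alpha>::real. 1/\<alpha>^4) \<longlongrightarrow> 0) at_top" by real_asymp
  have inv2a: "((\<lambda>\<alpha>::real. 1/(2*\<alpha>)) \<longlongrightarrow> 0) at_top" by real_asymp
  have lnlim: "((\<lambda>\<alpha>::real. (4 * ln \<alpha> + vh)/(4*\<alpha>^2)) \<longlongrightarrow> 0) at_top" by real_asymp
  have c_lim: "(c \<longlongrightarrow> 0) at_top"
  proof (rule tendsto_sandwich[OF _ _ tendsto_const inv2])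
    show "eventually (\<lambda>\<alpha>. 0 \<le> c \<alpha>) at_top" by (rule EV) (use th in force)
    show "eventually (\<lambda>\<alpha>. c \<alpha> \<le> 1/\<alpha>^2) at_top" by (rule EV) (use th in force)
  qed
  have s_lim: "(s \<longlongrightarrow> 1) at_top"
  proof -
    have "((\<lambda>\<alpha>. sqrt (1 - (c \<alpha>)^2)) \<longlongrightarrow> sqrt (1 - 0^2)) at_top"
      by (intro tendsto_intros c_lim)
    moreover have "eventually (\<lambda>\<alpha>. sqrt (1 - (c \<alpha>)^2) = s \<alpha>) at_top"
    proof (rule EV)
      fix \<alpha> :: real assume a: "\<alpha> > 1"
      have "1 - (c \<alpha>)^2 = (s \<alpha>)^2" by (simp add: c_def s_def sin_squared_eq)
      then show "sqrt (1 - (c \<alpha>)^2) = s \<alpha>" using th[OF a] by simp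
    qed
    ultimately show ?thesis by (simp add: Lim_transform_eventually)
  qed
  have aC: "((\<lambda>\<alpha>. \<alpha> * Cc \<alpha>) \<longlongrightarrow> 1/2) at_top"
  proof -
    have "((\<lambda>\<alpha>. s \<alpha> / 2) \<longlongrightarrow> 1/2) at_top" using s_lim by (intro tendsto_intros) auto
    moreover have "eventually (\<lambda>\<alpha>. s \<alpha> / 2 = \<alpha> * Cc \<alpha>) at_top"
      by (rule EV) (simp add: Cc_eq)
    ultimately show ?thesis by (rule Lim_transform_eventually)
  qed
  have C2lim: "((\<lambda>\<alpha>. (Cc \<alpha>)^2) \<longlongrightarrow> 0) at_top"
  proof -
    have "((\<lambda>\<alpha>. (s \<alpha> * (1/(2*\<alpha>)))^2) \<longlongrightarrow> (1 * 0)^2) at_top"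
      by (intro tendsto_intros s_lim inv2a)
    then show ?thesis by (simp add: Cc_eq)
  qed
  define p where "p = (\<lambda>\<alpha>. ph \<alpha> (U \<alpha>))"
  define g where "g = (\<lambda>\<alpha>. gg \<alpha> (U \<alpha>))"
  define V where "V = (\<lambda>\<alpha>::real. (4 * ln \<alpha> + vh) / (2 * \<alpha>))"
  define A where "A = (\<lambda>\<alpha>. \<alpha> * V \<alpha> + be \<alpha> (U \<alpha>))"
  define E where "E = (\<lambda>\<alpha>. exp (vh/2 + be \<alpha> (U \<alpha>)))"
  have ag: "((\<lambda>\<alpha>. \<alpha> * g \<alpha>) \<longlongrightarrow> 0) at_top"
  proof (rule Lim_null_comparison)
    show "eventually (\<lambda>\<alpha>. norm (\<alpha> * g \<alpha>) \<le> (Cc \<alpha>)^2 + c \<alpha>) at_top"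
      by (rule EV) (use gb in \<open>auto simp: g_def\<close>)
    show "((\<lambda>\<alpha>. (Cc \<alpha>)^2 + c \<alpha>) \<longlongrightarrow> 0) at_top"
      using tendsto_add[OF C2lim c_lim] by simp
  qed
  have p_lim: "(p \<longlongrightarrow> -uh) at_top"
  proof -
    have "((\<lambda>\<alpha>. p \<alpha> + uh) \<longlongrightarrow> 0) at_top"
    proof (rule Lim_null_comparison)
      show "eventually (\<lambda>\<alpha>. norm (p \<alpha> + uh) \<le> \<bar>uh\<bar> * (1/\<alpha>^2)) at_top"
        by (rule EV) (use pb in \<open>auto simp: p_def\<close>)
      show "((\<lambda>\<alpha>. \<bar>uh\<bar> * (1/\<alpha>^2)) \<longlongrightarrow> 0) at_top"
        using tendsto_mult[OF tendsto_const inv2, of "\<bar>uh\<bar>"] by simp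
    qed
    from tendsto_diff[OF this tendsto_const[of uh]] show ?thesis by simp
  qed
  have be_lim: "((\<lambda>\<alpha>. be \<alpha> (U \<alpha>)) \<longlongrightarrow> 0) at_top"
  proof (rule Lim_null_comparison)
    show "eventually (\<lambda>\<alpha>. norm (be \<alpha> (U \<alpha>)) \<le> \<bar>uh\<bar> * (1/\<alpha>)) at_top"
      by (rule EV) (use beb in auto)
    show "((\<lambda>\<alpha>. \<bar>uh\<bar> * (1/\<alpha>)) \<longlongrightarrow> 0) at_top"
      using tendsto_mult[OF tendsto_const inv1, of "\<bar>uh\<bar>"] by simp
  qed
  have G_lim: "((\<lambda>\<alpha>. G \<alpha> (U \<alpha>)) \<longlongrightarrow> 0) at_top"
  proof (rule Lim_null_comparison)
    show "eventually (\<lambda>\<alpha>. norm (G \<alpha> (U \<alpha>)) \<le> \<bar>uh\<bar> * (1/\<alpha>)) at_top"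
      by (rule EV) (use Gb in auto)
    show "((\<lambda>\<alpha>. \<bar>uh\<bar> * (1/\<alpha>)) \<longlongrightarrow> 0) at_top"
      using tendsto_mult[OF tendsto_const inv1, of "\<bar>uh\<bar>"] by simp
  qed
  have E_lim: "(E \<longlongrightarrow> exp (vh/2)) at_top"
    unfolding E_def using tendsto_exp[OF tendsto_add[OF tendsto_const be_lim, of "vh/2"]] by simp
  have eA: "exp (A \<alpha>) = \<alpha>^2 * E \<alpha>" if a: "\<alpha> > 1" for \<alpha>
  proof -
    have "A \<alpha> = ln \<alpha> + ln \<alpha> + (vh/2 + be \<alpha> (U \<alpha>))" using a by (simp add: A_def V_def field_simps)
    moreover have "exp (2 * ln \<alpha>) = \<alpha> * \<alpha>"
      using exp_of_nat_mult[of 2 "ln \<alpha>"] a by (simp add: power2_eq_square)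
    ultimately show ?thesis using a by (simp add: exp_add E_def power2_eq_square)
  qed
  have p4: "\<And>\<alpha>::real. \<alpha>^4 = \<alpha>*(\<alpha>*(\<alpha>*\<alpha>))" by (simp add: eval_nat_numeral)
  have Epos: "E \<alpha> > 0" for \<alpha> by (simp add: E_def)
  have sh: "((\<lambda>\<alpha>. sinh (A \<alpha>) / \<alpha>^2) \<longlongrightarrow> exp (vh/2) / 2) at_top"
  proof -
    have "((\<lambda>\<alpha>. (E \<alpha> - inverse (E \<alpha>) * (1/\<alpha>^4)) / 2) \<longlongrightarrow> (exp (vh/2) - inverse (exp (vh/2)) * 0) / 2) at_top"
      by (intro tendsto_intros E_lim inv4) auto
    moreover have "eventually (\<lambda>\<alpha>. (E \<alpha> - inverse (E \<alpha>) * (1/\<alpha>^4)) / 2 = sinh (A \<alpha>) / \<alpha>^2) at_top"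
    proof (rule EV)
      fix \<alpha> :: real assume a: "\<alpha> > 1"
      show "(E \<alpha> - inverse (E \<alpha>) * (1/\<alpha>^4)) / 2 = sinh (A \<alpha>) / \<alpha>^2"
        using a Epos[of \<alpha>] by (simp add: sinh_field_def exp_minus eA field_simps power2_eq_square p4)
    qed
    ultimately show ?thesis by (auto elim: Lim_transform_eventually)
  qed
  have ch: "((\<lambda>\<alpha>. cosh (A \<alpha>) / \<alpha>^2) \<longlongrightarrow> exp (vh/2) / 2) at_top"
  proof -
    have "((\<lambda>\<alpha>. (E \<alpha> + inverse (E \<alpha>) * (1/\<alpha>^4)) / 2) \<longlongrightarrow> (exp (vh/2) + inverse (exp (vh/2)) * 0) / 2) at_top"
      by (intro tendsto_intros E_lim inv4) auto
    moreover have "eventually (\<lambda>\<alpha>. (E \<alpha> + inverse (E \<alpha>) * (1/\<alpha>^4)) / 2 = cosh (A \<alpha>) / \<alpha>^2) at_top"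
    proof (rule EV)
      fix \<alpha> :: real assume a: "\<alpha> > 1"
      show "(E \<alpha> + inverse (E \<alpha>) * (1/\<alpha>^4)) / 2 = cosh (A \<alpha>) / \<alpha>^2"
        using a Epos[of \<alpha>] by (simp add: cosh_field_def exp_minus eA field_simps power2_eq_square p4)
    qed
    ultimately show ?thesis by (auto elim: Lim_transform_eventually)
  qed
  have x1eq: "fst (y \<alpha>) = g \<alpha> / \<alpha> * cos (p \<alpha>) * sinh (A \<alpha>) - Cc \<alpha> / \<alpha> * sin (p \<alpha>) * cosh (A \<alpha>)" for \<alpha>
    by (simp add: y_def Xmap_x1 g_def gg_def p_def U_def A_def V_def Cc_def)
  have x2eq: "fst (snd (y \<alpha>)) = Cc \<alpha> * V \<alpha> - G \<alpha> (U \<alpha>)" for \<alpha>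
    by (simp add: y_def Xmap_x2 U_def V_def Cc_def)
  have y3eq: "snd (snd (y \<alpha>)) + fst (y \<alpha>) * fst (snd (y \<alpha>)) / 2
     = Cc \<alpha> / \<alpha> * (g \<alpha> / \<alpha> - 1) * cos (p \<alpha>) * cosh (A \<alpha>)
       - 1 / \<alpha> * ((Cc \<alpha>)^2 / \<alpha> + g \<alpha>) * sin (p \<alpha>) * sinh (A \<alpha>)" for \<alpha>
    unfolding y_def Xmap_y3 by (simp add: g_def gg_def p_def U_def A_def V_def Cc_def)
  have L1: "((\<lambda>\<alpha>. fst (y \<alpha>)) \<longlongrightarrow> sin uh / 4 * exp (vh / 2)) at_top"
  proof -
    have "((\<lambda>\<alpha>. (\<alpha>*g \<alpha>)*cos (p \<alpha>)*(sinh (A \<alpha>)/\<alpha>^2) - (\<alpha>*Cc \<alpha>)* sin (p \<alpha>)*(cosh (A \<alpha>)/\<alpha>^2))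
       \<longlongrightarrow> 0 * cos (-uh) * (exp (vh/2)/2) - (1/2) * sin (-uh) * (exp (vh/2)/2)) at_top"
      by (intro tendsto_intros ag aC p_lim sh ch)
    moreover have "eventually (\<lambda>\<alpha>. (\<alpha>*g \<alpha>)*cos (p \<alpha>)*(sinh (A \<alpha>)/\<alpha>^2) - (\<alpha>*Cc \<alpha>)* sin (p \<alpha>)*(cosh (A \<alpha>)/\<alpha>^2) = fst (y \<alpha>)) at_top"
      by (rule EV) (simp only: x1eq, rule alg1[symmetric], simp)
    ultimately have "((\<lambda>\<alpha>. fst (y \<alpha>)) \<longlongrightarrow> 0 * cos (-uh) * (exp (vh/2)/2) - (1/2) * sin (-uh) * (exp (vh/2)/2)) at_top"
      by (rule Lim_transform_eventually)
    then show ?thesis by simp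
  qed
  have L2: "((\<lambda>\<alpha>. fst (snd (y \<alpha>))) \<longlongrightarrow> 0) at_top"
  proof -
    have "((\<lambda>\<alpha>. s \<alpha> * ((4 * ln \<alpha> + vh)/(4*\<alpha>^2)) - G \<alpha> (U \<alpha>)) \<longlongrightarrow> 1 * 0 - 0) at_top"
      by (intro tendsto_intros s_lim lnlim G_lim)
    moreover have "eventually (\<lambda>\<alpha>. s \<alpha> * ((4 * ln \<alpha> + vh)/(4*\<alpha>^2)) - G \<alpha> (U \<alpha>) = fst (snd (y \<alpha>))) at_top"
      by (rule EV) (simp add: x2eq Cc_eq V_def field_simps power2_eq_square)
    ultimately show ?thesis by (auto elim: Lim_transform_eventually)
  qed
  have L3: "((\<lambda>\<alpha>. snd (snd (y \<alpha>)) + fst (y \<alpha>) * fst (snd (y \<alpha>)) / 2) \<longlongrightarrow> - cos uh / 4 * exp (vh / 2)) at_top"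
  proof -
    have "((\<lambda>\<alpha>. (\<alpha>*Cc \<alpha>)*((\<alpha>*g \<alpha>)*(1/\<alpha>^2) - 1)*cos (p \<alpha>)*(cosh (A \<alpha>)/\<alpha>^2)
          - ((\<alpha>*Cc \<alpha>)^2*(1/\<alpha>^2) + \<alpha>*g \<alpha>)* sin (p \<alpha>)*(sinh (A \<alpha>)/\<alpha>^2))
       \<longlongrightarrow> (1/2)*(0*0 - 1)*cos (-uh)*(exp (vh/2)/2) - ((1/2)^2*0 + 0)* sin (-uh)*(exp (vh/2)/2)) at_top"
      by (intro tendsto_intros ag aC p_lim sh ch inv2)
    moreover have "eventually (\<lambda>\<alpha>. (\<alpha>*Cc \<alpha>)*((\<alpha>*g \<alpha>)*(1/\<alpha>^2) - 1)*cos (p \<alpha>)*(cosh (A \<alpha>)/\<alpha>^2)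
          - ((\<alpha>*Cc \<alpha>)^2*(1/\<alpha>^2) + \<alpha>*g \<alpha>)* sin (p \<alpha>)*(sinh (A \<alpha>)/\<alpha>^2)
          = snd (snd (y \<alpha>)) + fst (y \<alpha>) * fst (snd (y \<alpha>)) / 2) at_top"
      by (rule EV) (simp only: y3eq, rule alg2[symmetric], simp)
    ultimately have "((\<lambda>\<alpha>. snd (snd (y \<alpha>)) + fst (y \<alpha>) * fst (snd (y \<alpha>)) / 2)
       \<longlongrightarrow> (1/2)*(0*0 - 1)*cos (-uh)*(exp (vh/2)/2) - ((1/2)^2*0 + 0)* sin (-uh)*(exp (vh/2)/2)) at_top"
      by (rule Lim_transform_eventually)
    then show ?thesis by simp
  qed
  show ?thesis using L1 L2 L3 by blast
qed

end
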